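(* Let $n\geqslant 1$. Every $\lambda\subset\mathbb N^{3n}$ which is a partition with embedding dimension $h_\lambda(1)=3n$ and socle type $(0,0,0,n)$ has Hilbert–Samuel function $(1,3n,3n,n)$; in particular it is an M-partition of type $(3n,3n,n)$ and length $3$. Moreover \[ \alpha^{3n}_{3n,n,3}=\frac{(3n)!}{6^n\,n!}. \]
   Context: Let $\mathbb N=\mathbb Z_{\geqslant 0}$ with the componentwise order. A partition in $\mathbb N^k$ is a finite subset $\lambda\subset\mathbb N^k$ closed downward; $\mathrm P^k_d$ is the set of those of size $d$. The degree of a point is the sum of its coordinates; $\lambda_{=i}$, $\lambda_{\geqslant i}$ are the elements of degree $i$, resp. $\geqslant i$; the Hilbert–Samuel function is $h_\lambda(i)=|\lambda_{=i}|$, written as the tuple $(h_\lambda(0),h_\lambda(1),\dots,h_\lambda(\ell))$ with $\ell=\ell(\lambda)$ the maximal degree (the length); $h_\lambda(1)$ is the embedding dimension. $\mathrm{Soc}(\lambda)$ is the set of maximal elements; the socle type $(0,0,0,n)$ means all elements of $\mathrm{Soc}(\lambda)$ have degree $3$ and there are exactly $n$ of them. For positive integers $k,q,m$, an M-partition of type $(k,q,m)$ is $\lambda\in\mathrm P^k_{1+k+q+m}$ with $\mathrm{Soc}(\lambda)\subset\lambda_{\geqslant3}$, $h_\lambda(1)=k$, $h_\lambda(2)=q$, $\sum_{i\geqslant3}h_\lambda(i)=m$; $\alpha^k_{q,m,\ell}$ is the number of M-partitions of type $(k,q,m)$ and length $\ell$. *)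

theory Defs
  imports Complex_Main
begin

text \<open>Points of N^k are modelled as functions nat => nat vanishing at all indices >= k;
the componentwise order is the pointwise order on functions.\<close>

definition pts :: "nat \<Rightarrow> (nat \<Rightarrow> nat) set" where
  "pts k = {x. \<forall>i\<ge>k. x i = 0}"

definition is_partition :: "nat \<Rightarrow> (nat \<Rightarrow> nat) set \<Rightarrow> bool" where
  "is_partition k lam \<longleftrightarrow> finite lam \<and> lam \<subseteq> pts k \<and>
     (\<forall>x\<in>lam. \<forall>y\<in>pts k. y \<le> x \<longrightarrow> y \<in> lam)"

definition deg :: "nat \<Rightarrow> (nat \<Rightarrow> nat) \<Rightarrow> nat" where
  "deg k x = (\<Sum>i<k. x i)"

definition hilb :: "nat \<Rightarrow> (nat \<Rightarrow> nat) set \<Rightarrow> nat \<Rightarrow> nat" where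
  "hilb k lam i = card {x\<in>lam. deg k x = i}"

definition plength :: "nat \<Rightarrow> (nat \<Rightarrow> nat) set \<Rightarrow> nat" where
  "plength k lam = Max (deg k ` lam)"

definition hilb_tuple :: "nat \<Rightarrow> (nat \<Rightarrow> nat) set \<Rightarrow> nat list" where
  "hilb_tuple k lam = map (hilb k lam) [0..<Suc (plength k lam)]"

definition socle :: "(nat \<Rightarrow> nat) set \<Rightarrow> (nat \<Rightarrow> nat) set" where
  "socle lam = {x\<in>lam. \<forall>y\<in>lam. x \<le> y \<longrightarrow> y = x}"

text \<open>Socle type (0,0,0,n): all socle elements have degree 3 and there are exactly n of them.\<close>
definition socle_type_3 :: "nat \<Rightarrow> (nat \<Rightarrow> nat) set \<Rightarrow> nat \<Rightarrow> bool" where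
  "socle_type_3 k lam n \<longleftrightarrow> (\<forall>x\<in>socle lam. deg k x = 3) \<and> card (socle lam) = n"

definition M_partition :: "nat \<Rightarrow> nat \<Rightarrow> nat \<Rightarrow> (nat \<Rightarrow> nat) set \<Rightarrow> bool" where
  "M_partition k q m lam \<longleftrightarrow> is_partition k lam \<and> card lam = 1 + k + q + m \<and>
     (\<forall>x\<in>socle lam. deg k x \<ge> 3) \<and> hilb k lam 1 = k \<and> hilb k lam 2 = q \<and>
     card {x\<in>lam. deg k x \<ge> 3} = m"

definition alpha :: "nat \<Rightarrow> nat \<Rightarrow> nat \<Rightarrow> nat \<Rightarrow> nat" where
  "alpha k q m l = card {lam. M_partition k q m lam \<and> plength k lam = l}"

end

theory Submission
  imports Defs
begin

definition TP :: "nat set \<Rightarrow> nat set set set" where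
  "TP A = {P. (\<forall>t\<in>P. card t = 3) \<and> \<Union>P = A \<and> (\<forall>t\<in>P. \<forall>u\<in>P. t \<noteq> u \<longrightarrow> t \<inter> u = {})}"

lemma TP_finite: "finite A \<Longrightarrow> P \<in> TP A \<Longrightarrow> finite P"
proof -
  assume "finite A" "P \<in> TP A"
  then have "P \<subseteq> Pow A" unfolding TP_def by auto
  then show "finite P" using \<open>finite A\<close> finite_subset by blast
qed

lemma TP_fin: "finite A \<Longrightarrow> finite (TP A)"
proof -
  assume "finite A"
  have "TP A \<subseteq> Pow (Pow A)" unfolding TP_def by auto
  then show ?thesis using \<open>finite A\<close> finite_subset by blast
qed

lemma TP_empty: "TP {} = {{}}"
  unfolding TP_def by (auto, metis card.empty zero_neq_numeral)

lemma TP_step: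
  assumes fin: "finite A" and a: "a \<in> A"
  shows "TP A = (\<lambda>(t,Q). insert t Q) ` (SIGMA t:{t. t \<subseteq> A \<and> a \<in> t \<and> card t = 3}. TP (A - t))"
    (is "_ = ?f ` ?S")
proof
  show "TP A \<subseteq> ?f ` ?S"
  proof
    fix P assume P: "P \<in> TP A"
    then obtain t where t: "t \<in> P" "a \<in> t" using a unfolding TP_def by auto
    have "P - {t} \<in> TP (A - t)" using P t unfolding TP_def by auto
    moreover have "t \<subseteq> A" using P t unfolding TP_def by auto
    moreover have "card t = 3" using P t unfolding TP_def by auto
    ultimately have "(t, P - {t}) \<in> ?S" using t by auto
    moreover have "P = ?f (t, P - {t})" using t by auto
    ultimately show "P \<in> ?f ` ?S" by blast
  qed
next
  show "?f ` ?S \<subseteq> TP A"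
  proof
    fix P assume "P \<in> ?f ` ?S"
    then obtain t Q where tQ: "t \<subseteq> A" "a \<in> t" "card t = 3" "Q \<in> TP (A - t)" "P = insert t Q" by auto
    have "\<forall>u\<in>Q. u \<subseteq> A - t" using tQ(4) unfolding TP_def by auto
    then show "P \<in> TP A" using tQ unfolding TP_def by auto
  qed
qed

lemma TP_inj:
  assumes a: "a \<in> A"
  shows "inj_on (\<lambda>(t,Q). insert t Q) (SIGMA t:{t. t \<subseteq> A \<and> a \<in> t \<and> card t = 3}. TP (A - t))"
proof (rule inj_onI, clarify)
  fix t Q t' Q'
  assume h: "t \<subseteq> A" "a \<in> t" "card t = 3" "Q \<in> TP (A - t)" "t' \<subseteq> A" "a \<in> t'" "card t' = 3"
    "Q' \<in> TP (A - t')" "insert t Q = insert t' Q'"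
  have "\<Union>Q = A - t" "\<Union>Q' = A - t'" using h(4,8) unfolding TP_def by simp_all
  then have aQ: "\<forall>u\<in>Q. a \<notin> u" "\<forall>u\<in>Q'. a \<notin> u" using h(2,6) by blast+
  have "t = t'" using h(9) aQ h(2,6) by blast
  moreover have "t \<notin> Q" "t' \<notin> Q'" using aQ h(2,6) by auto
  ultimately show "t = t' \<and> Q = Q'" using h(9)
    by (metis insert_ident)
qed

lemma card_I:
  assumes fin: "finite A" and a: "a \<in> A"
  shows "card {t. t \<subseteq> A \<and> a \<in> t \<and> card t = 3} = (card A - 1) choose 2"
proof -
  have eq: "{t. t \<subseteq> A \<and> a \<in> t \<and> card t = 3} = insert a ` {s. s \<subseteq> A - {a} \<and> card s = 2}"
  proof
    show "{t. t \<subseteq> A \<and> a \<in> t \<and> card t = 3} \<subseteq> insert a ` {s. s \<subseteq> A - {a} \<and> card s = 2}"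
    proof
      fix t assume t: "t \<in> {t. t \<subseteq> A \<and> a \<in> t \<and> card t = 3}"
      then have "finite t" using fin finite_subset by blast
      then have "t = insert a (t - {a})" "card (t - {a}) = 2" using t by auto
      then show "t \<in> insert a ` {s. s \<subseteq> A - {a} \<and> card s = 2}" using t by blast
    qed
  next
    show "insert a ` {s. s \<subseteq> A - {a} \<and> card s = 2} \<subseteq> {t. t \<subseteq> A \<and> a \<in> t \<and> card t = 3}"
    proof
      fix t assume "t \<in> insert a ` {s. s \<subseteq> A - {a} \<and> card s = 2}"
      then obtain s where s: "s \<subseteq> A - {a}" "card s = 2" "t = insert a s" by auto
      have "finite s" using s(2) card.infinite by fastforce
      moreover have "a \<notin> s" using s by auto
      ultimately show "t \<in> {t. t \<subseteq> A \<and> a \<in> t \<and> card t = 3}" using s a by auto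
    qed
  qed
  have inj: "inj_on (insert a) {s. s \<subseteq> A - {a} \<and> card s = 2}"
  proof (rule inj_onI)
    fix x y assume xy: "x \<in> {s. s \<subseteq> A - {a} \<and> card s = 2}" "y \<in> {s. s \<subseteq> A - {a} \<and> card s = 2}" "insert a x = insert a y"
    then have "a \<notin> x" "a \<notin> y" by auto
    then show "x = y" using xy(3) by (metis Diff_insert_absorb)
  qed
  have "card {s. s \<subseteq> A - {a} \<and> card s = 2} = card (A - {a}) choose 2"
    using n_subsets[of "A - {a}" 2] fin by auto
  then show ?thesis using eq inj card_image a fin by (simp add: card_image)
qed

lemma card_TP: "finite A \<Longrightarrow> card A = 3*m \<Longrightarrow> card (TP A) * 6^m * fact m = fact (3*m)"
proof (induction m arbitrary: A)
  case 0
  then have "A = {}" by auto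
  then show ?case by (simp add: TP_empty)
next
  case (Suc m)
  have "A \<noteq> {}" using Suc.prems(2) by auto
  then obtain a where a: "a \<in> A" by blast
  let ?I = "{t. t \<subseteq> A \<and> a \<in> t \<and> card t = 3}"
  have fI: "finite ?I" by (rule rev_finite_subset[of "Pow A"]) (auto simp: Suc.prems(1))
  have "card (TP A) = card (SIGMA t:?I. TP (A - t))"
    unfolding TP_step[OF Suc.prems(1) a] by (rule card_image[OF TP_inj[OF a]])
  also have "\<dots> = (\<Sum>t\<in>?I. card (TP (A - t)))"
    using fI by (rule card_SigmaI) (use Suc.prems(1) TP_fin in auto)
  finally have c: "card (TP A) = (\<Sum>t\<in>?I. card (TP (A - t)))" .
  have "\<And>t. t \<in> ?I \<Longrightarrow> card (TP (A - t)) * 6^m * fact m = fact (3*m)"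
  proof -
    fix t assume t: "t \<in> ?I"
    have "card (A - t) = 3*m" proof -
      have "t \<subseteq> A" "card t = 3" using t by auto
      then have "card (A - t) = card A - card t" using Suc.prems(1) by (meson card_Diff_subset finite_subset)
      then show ?thesis using Suc.prems(2) \<open>card t = 3\<close> by simp
    qed
    then show "card (TP (A - t)) * 6^m * fact m = fact (3*m)" using Suc.IH Suc.prems(1) by auto
  qed
  then have "card (TP A) * 6^m * fact m = card ?I * fact (3*m)"
    unfolding c sum_distrib_right by simp
  also have "\<dots> = ((3*m+2) choose 2) * fact (3*m)"
    using card_I[OF Suc.prems(1) a] Suc.prems(2) by simp
  finally have e: "card (TP A) * 6^m * fact m = ((3*m+2) choose 2) * fact (3*m)" .
  have ch: "2 * ((3*m+2) choose 2) = (3*m+2)*(3*m+1)"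
    by (simp add: choose_two)
  have "fact (3 * Suc m) = (3*m+3)*(3*m+2)*(3*m+1) * (fact (3*m) :: nat)"
    by (simp add: fact_Suc algebra_simps numeral_3_eq_3)
  also have "\<dots> = 3*(m+1)* (2 * ((3*m+2) choose 2)) * fact (3*m)" unfolding ch by (simp add: algebra_simps)
  also have "\<dots> = 6*(m+1) * (card (TP A) * 6^m * fact m)" using e by simp
  also have "\<dots> = card (TP A) * 6 ^ Suc m * fact (Suc m)" by (simp add: algebra_simps)
  finally show ?case by simp
qed

definition chi :: "nat set \<Rightarrow> nat \<Rightarrow> nat" where
  "chi S = (\<lambda>i. if i \<in> S then 1 else 0)"

definition supp :: "(nat \<Rightarrow> nat) \<Rightarrow> nat set" where
  "supp x = {i. x i \<noteq> 0}"

definition DP :: "nat set set \<Rightarrow> nat set set" where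
  "DP P = {S. \<exists>T\<in>P. S \<subseteq> T}"

definition LP :: "nat set set \<Rightarrow> (nat \<Rightarrow> nat) set" where
  "LP P = chi ` DP P"

lemma supp_chi[simp]: "supp (chi S) = S"
  unfolding supp_def chi_def by auto

lemma chi_inj: "inj chi"
  by (rule inj_on_inverseI[where g=supp]) simp


lemma chi_le_iff: "chi S \<le> chi T \<longleftrightarrow> S \<subseteq> T"
  unfolding chi_def le_fun_def by auto

lemma le_chi: "y \<le> chi S \<Longrightarrow> y = chi (supp y) \<and> supp y \<subseteq> S"
proof -
  assume h: "y \<le> chi S"
  have "\<And>i. y i \<le> (if i \<in> S then 1 else 0)" using h unfolding le_fun_def chi_def by auto
  then have yy: "\<And>i. y i = (if y i \<noteq> 0 then 1 else 0) \<and> (y i \<noteq> 0 \<longrightarrow> i \<in> S)"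
  proof -
    fix i assume "\<And>i. y i \<le> (if i \<in> S then 1 else 0)"
    then have "y i \<le> (if i \<in> S then 1 else 0)" .
    then show "y i = (if y i \<noteq> 0 then 1 else 0) \<and> (y i \<noteq> 0 \<longrightarrow> i \<in> S)"
      by (cases "i \<in> S") auto
  qed
  then have "y = chi (supp y)" unfolding chi_def supp_def by (auto simp: fun_eq_iff)
  moreover have "supp y \<subseteq> S" using yy unfolding supp_def by auto
  ultimately show ?thesis by blast
qed

lemma supp_sub: assumes "x \<in> pts k" shows "supp x \<subseteq> {..<k}"
proof
  fix i assume "i \<in> supp x"
  then have "x i \<noteq> 0" by (simp add: supp_def)
  moreover have "k \<le> i \<Longrightarrow> x i = 0" using assms by (simp add: pts_def)
  ultimately show "i \<in> {..<k}" by (cases "k \<le> i") auto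
qed

lemma chi_pts: "S \<subseteq> {..<k} \<Longrightarrow> chi S \<in> pts k"
  unfolding pts_def chi_def by auto

lemma deg_supp: "x \<in> pts k \<Longrightarrow> deg k x = (\<Sum>i\<in>supp x. x i)"
  unfolding deg_def
  by (rule sum.mono_neutral_right) (use supp_sub[of x k] in \<open>auto simp: supp_def\<close>)

lemma fin_supp: assumes "x \<in> pts k" shows "finite (supp x)"
  using finite_subset[OF supp_sub[OF assms]] by simp

lemma card_supp_le: "x \<in> pts k \<Longrightarrow> card (supp x) \<le> deg k x"
proof -
  assume x: "x \<in> pts k"
  have "card (supp x) = (\<Sum>i\<in>supp x. (1::nat))" by simp
  also have "\<dots> \<le> (\<Sum>i\<in>supp x. x i)" by (rule sum_mono) (auto simp: supp_def)
  finally show ?thesis using deg_supp[OF x] by simp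
qed

lemma supp_eq_chi: "x \<in> pts k \<Longrightarrow> card (supp x) = deg k x \<Longrightarrow> x = chi (supp x)"
proof
  fix i assume x: "x \<in> pts k" and c: "card (supp x) = deg k x"
  show "x i = chi (supp x) i"
  proof (cases "i \<in> supp x")
    case True
    have "(\<Sum>i\<in>supp x. (1::nat)) = (\<Sum>i\<in>supp x. x i)" using c deg_supp[OF x] by simp
    then have "1 = x i"
      by (rule sum_mono_inv) (use True fin_supp[OF x] in \<open>auto simp: supp_def\<close>)
    then show ?thesis using True unfolding chi_def by simp
  next
    case False
    then show ?thesis unfolding chi_def supp_def by simp
  qed
qed

lemma deg_chi: "S \<subseteq> {..<k} \<Longrightarrow> deg k (chi S) = card S"
proof -
  assume S: "S \<subseteq> {..<k}"
  have "deg k (chi S) = (\<Sum>i\<in>S. chi S i)" using deg_supp[OF chi_pts[OF S]] by simp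
  also have "\<dots> = (\<Sum>i\<in>S. 1)" by (rule sum.cong) (auto simp: chi_def)
  finally show ?thesis by simp
qed

lemma deg_strict:
  assumes "x \<in> pts k" "y \<in> pts k" "x \<le> y" "x \<noteq> y"
  shows "deg k x < deg k y"
proof -
  obtain i where i: "x i \<noteq> y i" using assms(4) by blast
  have "i < k"
  proof (rule ccontr)
    assume "\<not> i < k"
    then have "k \<le> i" by simp
    then have "x i = 0" "y i = 0" using assms(1,2) unfolding pts_def by auto
    with i show False by simp
  qed
  have le: "\<forall>j\<in>{..<k}. x j \<le> y j" using assms(3) by (simp add: le_fun_def)
  have "x i \<le> y i" using assms(3) by (simp add: le_fun_def)
  with i have lt: "x i < y i" by simp
  show ?thesis unfolding deg_def
    apply (rule sum_strict_mono_ex1)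
    using le lt \<open>i < k\<close> by auto
qed

lemma deg_mono: "x \<le> y \<Longrightarrow> deg k x \<le> deg k y"
  unfolding deg_def by (rule sum_mono) (auto simp: le_fun_def)

lemma deg1:
  assumes x: "x \<in> pts k" and d: "deg k x = 1"
  shows "\<exists>a<k. x = chi {a}"
proof -
  have "supp x \<noteq> {}" using deg_supp[OF x] d by auto
  moreover have "card (supp x) \<le> 1" using card_supp_le[OF x] d by simp
  moreover have "card (supp x) \<noteq> 0" using calculation(1) fin_supp[OF x] by simp
  ultimately have "card (supp x) = 1" by linarith
  then obtain a where a: "supp x = {a}" by (rule card_1_singletonE)
  have "x = chi {a}" using supp_eq_chi[OF x] a d by simp
  moreover have "a < k" using supp_sub[OF x] a by auto
  ultimately show ?thesis by blast
qed

lemma TP_props: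
  assumes P: "P \<in> TP {..<k}"
  shows "\<And>T. T \<in> P \<Longrightarrow> T \<subseteq> {..<k}" "finite P" "\<And>T. T \<in> P \<Longrightarrow> card T = 3"
    "\<And>T. T \<in> P \<Longrightarrow> finite T" "3 * card P = k"
proof -
  show sub: "\<And>T. T \<in> P \<Longrightarrow> T \<subseteq> {..<k}" using P unfolding TP_def by auto
  show "finite P" using TP_finite[OF _ P] by simp
  show c3: "\<And>T. T \<in> P \<Longrightarrow> card T = 3" using P unfolding TP_def by auto
  show fT: "\<And>T. T \<in> P \<Longrightarrow> finite T" using sub finite_subset by blast
  have U: "\<Union>P = {..<k}" using P unfolding TP_def by auto
  have pd: "pairwise disjnt P" using P unfolding TP_def pairwise_def disjnt_def by auto
  have "k = card (\<Union>P)" using U by simp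
  also have "\<dots> = sum card P" by (rule card_Union_disjoint[OF pd fT])
  also have "\<dots> = (\<Sum>T\<in>P. 3)" by (rule sum.cong) (auto simp: c3)
  finally show "3 * card P = k" by simp
qed

lemma DP_sub:
  assumes P: "P \<in> TP {..<k}" and S: "S \<in> DP P"
  shows "S \<subseteq> {..<k}" "finite S" "card S \<le> 3"
proof -
  obtain T where T: "T \<in> P" "S \<subseteq> T" using S unfolding DP_def by auto
  show "S \<subseteq> {..<k}" using TP_props(1)[OF P T(1)] T(2) by auto
  show "finite S" using TP_props(4)[OF P T(1)] T(2) finite_subset by blast
  show "card S \<le> 3" using TP_props(3,4)[OF P T(1)] T(2) card_mono by metis
qed

lemma DP_fin: assumes P: "P \<in> TP {..<k}" shows "finite (DP P)"
proof -
  have "DP P \<subseteq> Pow {..<k}" using DP_sub(1)[OF P] by auto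
  then show ?thesis by (rule finite_subset) simp
qed

lemma cnt:
  assumes P: "P \<in> TP {..<k}" and d: "d \<ge> 1"
  shows "card {S\<in>DP P. card S = d} = card P * (3 choose d)"
proof -
  have eq: "{S\<in>DP P. card S = d} = (\<Union>T\<in>P. {S. S \<subseteq> T \<and> card S = d})"
    unfolding DP_def by auto
  have disj: "\<forall>T\<in>P. \<forall>T'\<in>P. T \<noteq> T' \<longrightarrow> {S. S \<subseteq> T \<and> card S = d} \<inter> {S. S \<subseteq> T' \<and> card S = d} = {}"
  proof (intro ballI impI)
    fix T T' assume TT: "T \<in> P" "T' \<in> P" "T \<noteq> T'"
    then have "T \<inter> T' = {}" using P unfolding TP_def by auto
    moreover have "\<And>S. card S = d \<Longrightarrow> S \<noteq> {}" using d by auto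
    ultimately show "{S. S \<subseteq> T \<and> card S = d} \<inter> {S. S \<subseteq> T' \<and> card S = d} = {}" by blast
  qed
  have fin2: "\<forall>T\<in>P. finite {S. S \<subseteq> T \<and> card S = d}"
    using TP_props(4)[OF P] by auto
  have "card {S\<in>DP P. card S = d} = (\<Sum>T\<in>P. card {S. S \<subseteq> T \<and> card S = d})"
    unfolding eq by (rule card_UN_disjoint[OF TP_props(2)[OF P] fin2 disj])
  also have "\<dots> = (\<Sum>T\<in>P. 3 choose d)"
  proof (rule sum.cong)
    fix T assume T: "T \<in> P"
    have "card {S. S \<subseteq> T \<and> card S = d} = card T choose d" by (rule n_subsets[OF TP_props(4)[OF P T]])
    then show "card {S. S \<subseteq> T \<and> card S = d} = 3 choose d" using TP_props(3)[OF P T] by simp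
  qed simp
  finally show ?thesis by simp
qed

lemma cnt0:
  assumes P: "P \<in> TP {..<k}" and ne: "P \<noteq> {}"
  shows "card {S\<in>DP P. card S = 0} = 1"
proof -
  have "{S\<in>DP P. card S = 0} = {{}}"
  proof
    show "{S\<in>DP P. card S = 0} \<subseteq> {{}}" using DP_sub(2)[OF P] by auto
    show "{{}} \<subseteq> {S\<in>DP P. card S = 0}" using ne unfolding DP_def by auto
  qed
  then show ?thesis by simp
qed

lemma hilb_LP:
  assumes P: "P \<in> TP {..<k}"
  shows "hilb k (LP P) d = card {S\<in>DP P. card S = d}"
proof -
  have "{x\<in>LP P. deg k x = d} = chi ` {S\<in>DP P. card S = d}"
    unfolding LP_def using deg_chi DP_sub(1)[OF P] by auto
  then have "hilb k (LP P) d = card (chi ` {S\<in>DP P. card S = d})" unfolding hilb_def by simp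
  also have "\<dots> = card {S\<in>DP P. card S = d}"
    by (rule card_image) (rule inj_on_subset[OF chi_inj], simp)
  finally show ?thesis .
qed

lemma deg_LP: assumes P: "P \<in> TP {..<k}" shows "deg k ` LP P = card ` DP P"
proof -
  have "deg k ` LP P = (\<lambda>S. deg k (chi S)) ` DP P" unfolding LP_def by (simp add: image_image)
  also have "\<dots> = card ` DP P" by (rule image_cong) (use deg_chi DP_sub(1)[OF P] in auto)
  finally show ?thesis .
qed

lemma LP_good:
  assumes n: "n \<ge> 1" and P: "P \<in> TP {..<3*n}"
  shows "hilb_tuple (3*n) (LP P) = [1, 3*n, 3*n, n] \<and> M_partition (3*n) (3*n) n (LP P)
     \<and> plength (3*n) (LP P) = 3"
proof -
  let ?k = "3*n"
  have cP: "card P = n" using TP_props(5)[OF P] by simp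
  have ne: "P \<noteq> {}" using cP n by auto
  have c32: "(3::nat) choose 2 = 3" by (simp add: choose_two)
  have h0: "hilb ?k (LP P) 0 = 1" using hilb_LP[OF P] cnt0[OF P ne] by simp
  have h1: "hilb ?k (LP P) 1 = 3*n" using hilb_LP[OF P] cnt[OF P, of 1] cP by simp
  have h2: "hilb ?k (LP P) 2 = 3*n" using hilb_LP[OF P] cnt[OF P, of 2] cP c32 by simp
  have h3: "hilb ?k (LP P) 3 = n" using hilb_LP[OF P] cnt[OF P, of 3] cP by simp
  have finD: "finite (DP P)" by (rule DP_fin[OF P])
  have PD: "P \<subseteq> DP P" unfolding DP_def by auto
  have pl: "plength ?k (LP P) = 3"
    unfolding plength_def deg_LP[OF P]
  proof (rule Max_eqI)
    show "finite (card ` DP P)" using finD by simp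
    show "\<And>y. y \<in> card ` DP P \<Longrightarrow> y \<le> 3" using DP_sub(3)[OF P] by auto
    obtain T where "T \<in> P" using ne by auto
    then show "3 \<in> card ` DP P" using PD TP_props(3)[OF P] by force
  qed
  have ispart: "is_partition ?k (LP P)"
    unfolding is_partition_def
  proof (intro conjI ballI impI)
    show "finite (LP P)" unfolding LP_def using finD by simp
    show "LP P \<subseteq> pts ?k" unfolding LP_def using chi_pts DP_sub(1)[OF P] by auto
    fix x y assume x: "x \<in> LP P" and y: "y \<in> pts ?k" "y \<le> x"
    then obtain S where S: "S \<in> DP P" "x = chi S" unfolding LP_def by auto
    then have "y = chi (supp y)" "supp y \<subseteq> S" using le_chi y(2) by auto
    moreover have "supp y \<in> DP P" using S(1) \<open>supp y \<subseteq> S\<close> unfolding DP_def by auto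
    ultimately show "y \<in> LP P" unfolding LP_def by auto
  qed
  have cardL: "card (LP P) = 1 + ?k + ?k + n"
  proof -
    have "card (LP P) = card (DP P)" unfolding LP_def
      by (rule card_image) (rule inj_on_subset[OF chi_inj], simp)
    also have "DP P = (\<Union>d\<in>{0,1,2,3}. {S\<in>DP P. card S = d})"
      using DP_sub(3)[OF P] by force
    also have "card \<dots> = (\<Sum>d\<in>{0,1,2,3::nat}. card {S\<in>DP P. card S = d})"
      by (rule card_UN_disjoint) (use finD in auto)
    also have "\<dots> = 1 + ?k + ?k + n" using h0 h1 h2 h3 hilb_LP[OF P] by simp
    finally show ?thesis .
  qed
  have soc: "\<forall>x\<in>socle (LP P). deg ?k x \<ge> 3"
  proof
    fix x assume x: "x \<in> socle (LP P)"
    then obtain S where S: "S \<in> DP P" "x = chi S" unfolding socle_def LP_def by auto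
    then obtain T where T: "T \<in> P" "S \<subseteq> T" unfolding DP_def by auto
    have "chi T \<in> LP P" using T PD unfolding LP_def by auto
    moreover have "x \<le> chi T" using S T chi_le_iff by auto
    ultimately have "chi T = x" using x unfolding socle_def by auto
    then have "x = chi T" by simp
    then show "deg ?k x \<ge> 3" using deg_chi TP_props(1,3)[OF P T(1)] by simp
  qed
  have ge3: "card {x\<in>LP P. deg ?k x \<ge> 3} = n"
  proof -
    have "\<And>x. x \<in> LP P \<Longrightarrow> deg ?k x \<le> 3"
    proof -
      fix x assume "x \<in> LP P"
      then have "deg ?k x \<in> card ` DP P" using deg_LP[OF P] by blast
      then show "deg ?k x \<le> 3" using DP_sub(3)[OF P] by auto
    qed
    then have "{x\<in>LP P. deg ?k x \<ge> 3} = {x\<in>LP P. deg ?k x = 3}" by force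
    then show ?thesis using h3 unfolding hilb_def by simp
  qed
  have ht: "hilb_tuple ?k (LP P) = [1, ?k, ?k, n]"
  proof -
    have u: "[0..<Suc 3] = [0,1,2,(3::nat)]" by (simp add: eval_nat_numeral)
    show ?thesis unfolding hilb_tuple_def pl u using h0 h1 h2 h3 by simp
  qed
  show ?thesis using ht pl ispart cardL soc h1 h2 ge3 unfolding M_partition_def by simp
qed

lemma structure_thm:
  assumes n: "n \<ge> 1" and part: "is_partition (3*n) lam" and h1: "hilb (3*n) lam 1 = 3*n"
    and st: "socle_type_3 (3*n) lam n"
  shows "\<exists>P\<in>TP {..<3*n}. lam = LP P"
proof -
  define k where "k = 3*n"
  let ?S = "socle lam"
  have fin: "finite lam" and sub: "lam \<subseteq> pts k"
    and down: "\<And>x y. x \<in> lam \<Longrightarrow> y \<in> pts k \<Longrightarrow> y \<le> x \<Longrightarrow> y \<in> lam"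
    using part unfolding is_partition_def k_def by auto
  have Ssub: "?S \<subseteq> lam" unfolding socle_def by auto
  have finS: "finite ?S" using fin Ssub finite_subset by blast
  have Sdeg: "\<And>s. s \<in> ?S \<Longrightarrow> deg k s = 3" and cS: "card ?S = n"
    using st unfolding socle_type_3_def k_def by auto
  have above: "\<And>x. x \<in> lam \<Longrightarrow> \<exists>s\<in>?S. x \<le> s"
  proof -
    fix x assume x: "x \<in> lam"
    obtain m where m: "m \<in> lam" "x \<le> m" "\<forall>b\<in>lam. m \<le> b \<longrightarrow> m = b"
      using finite_has_maximal2[OF fin x] by blast
    then have "m \<in> ?S" unfolding socle_def by auto
    then show "\<exists>s\<in>?S. x \<le> s" using m(2) by blast
  qed
  have units: "\<And>a. a < k \<Longrightarrow> chi {a} \<in> lam"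
  proof -
    let ?D1 = "{x\<in>lam. deg k x = 1}"
    let ?E = "(\<lambda>a. chi {a}) ` {..<k}"
    have D1E: "?D1 \<subseteq> ?E"
    proof
      fix x assume "x \<in> ?D1"
      then have "x \<in> pts k" "deg k x = 1" using sub by auto
      then obtain a where "a < k" "x = chi {a}" using deg1 by blast
      then show "x \<in> ?E" by auto
    qed
    have injE: "inj_on (\<lambda>a. chi {a}) {..<k}"
    proof (rule inj_onI)
      fix a b assume "chi {a} = chi {b}"
      then have "{a} = {b}" by (rule injD[OF chi_inj])
      then show "a = b" by simp
    qed
    have cE: "card ?E = k" using card_image[OF injE] by simp
    have cD: "card ?D1 = k" using h1 unfolding hilb_def k_def by simp
    have "?D1 = ?E" by (rule card_subset_eq) (use D1E cE cD in auto)
    then show "\<And>a. a < k \<Longrightarrow> chi {a} \<in> lam" by auto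
  qed
  define f where "f a = (SOME s. s \<in> ?S \<and> chi {a} \<le> s)" for a
  have fS: "\<And>a. a < k \<Longrightarrow> f a \<in> ?S \<and> chi {a} \<le> f a"
  proof -
    fix a assume "a < k"
    then have "\<exists>s. s \<in> ?S \<and> chi {a} \<le> s" using above units by blast
    then show "f a \<in> ?S \<and> chi {a} \<le> f a" unfolding f_def by (rule someI_ex)
  qed
  have a_supp: "\<And>a. a < k \<Longrightarrow> a \<in> supp (f a)"
  proof -
    fix a assume "a < k"
    then have "chi {a} a \<le> f a a" using fS by (simp add: le_fun_def)
    then show "a \<in> supp (f a)" unfolding supp_def chi_def by auto
  qed
  define F where "F s = {a\<in>{..<k}. f a = s}" for s
  have Sp: "\<And>s. s \<in> ?S \<Longrightarrow> s \<in> pts k" using Ssub sub by auto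
  have F_sub: "\<And>s. s \<in> ?S \<Longrightarrow> F s \<subseteq> supp s" unfolding F_def using a_supp by auto
  have le3: "\<And>s. s \<in> ?S \<Longrightarrow> card (supp s) \<le> 3"
  proof -
    fix s assume s: "s \<in> ?S"
    show "card (supp s) \<le> 3" using card_supp_le[OF Sp[OF s]] Sdeg[OF s] by simp
  qed
  have Fle: "\<And>s. s \<in> ?S \<Longrightarrow> card (F s) \<le> 3"
  proof -
    fix s assume s: "s \<in> ?S"
    show "card (F s) \<le> 3" by (rule order_trans[OF card_mono[OF fin_supp[OF Sp[OF s]] F_sub[OF s]] le3[OF s]])
  qed
  have U: "{..<k} = (\<Union>s\<in>?S. F s)" unfolding F_def using fS by auto
  have "k = card (\<Union>s\<in>?S. F s)" using arg_cong[OF U, of card] card_lessThan[of k] by linarith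
  also have "\<dots> = (\<Sum>s\<in>?S. card (F s))"
    by (rule card_UN_disjoint) (use finS in \<open>auto simp: F_def\<close>)
  finally have sumF: "(\<Sum>s\<in>?S. card (F s)) = (\<Sum>s\<in>?S. 3)" using cS k_def by simp
  have F3: "\<And>s. s \<in> ?S \<Longrightarrow> card (F s) = 3"
    using sum_mono_inv[OF sumF Fle _ finS] by blast
  have Fsupp: "\<And>s. s \<in> ?S \<Longrightarrow> F s = supp s"
  proof -
    fix s assume s: "s \<in> ?S"
    show "F s = supp s"
      by (rule card_subset_eq[OF fin_supp[OF Sp[OF s]] F_sub[OF s]])
        (use le3[OF s] F3[OF s] card_mono[OF fin_supp[OF Sp[OF s]] F_sub[OF s]] in simp)
  qed
  have cs3: "\<And>s. s \<in> ?S \<Longrightarrow> card (supp s) = 3"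
  proof -
    fix s assume s: "s \<in> ?S"
    show "card (supp s) = 3" using Fsupp[OF s] F3[OF s] by simp
  qed
  have schi: "\<And>s. s \<in> ?S \<Longrightarrow> s = chi (supp s)"
  proof -
    fix s assume s: "s \<in> ?S"
    show "s = chi (supp s)" by (rule supp_eq_chi[OF Sp[OF s]]) (simp add: cs3[OF s] Sdeg[OF s])
  qed
  define P where "P = supp ` ?S"
  have PTP: "P \<in> TP {..<k}"
    unfolding TP_def
  proof (intro CollectI conjI ballI impI)
    fix t assume "t \<in> P" then show "card t = 3" using cs3 unfolding P_def by auto
  next
    show "\<Union>P = {..<k}"
    proof
      show "\<Union>P \<subseteq> {..<k}" unfolding P_def using supp_sub Sp by blast
      show "{..<k} \<subseteq> \<Union>P" unfolding P_def using fS a_supp by blast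
    qed
  next
    fix t u assume tu: "t \<in> P" "u \<in> P" "t \<noteq> u"
    then obtain s s' where ss: "s \<in> ?S" "s' \<in> ?S" "t = supp s" "u = supp s'" unfolding P_def by auto
    show "t \<inter> u = {}"
    proof (rule ccontr)
      assume "t \<inter> u \<noteq> {}"
      then obtain i where "i \<in> F s" "i \<in> F s'" using ss Fsupp by auto
      then have "s = s'" unfolding F_def by auto
      then show False using tu ss by simp
    qed
  qed
  have "lam = LP P"
  proof
    show "lam \<subseteq> LP P"
    proof
      fix x assume x: "x \<in> lam"
      then obtain s where s: "s \<in> ?S" "x \<le> s" using above by blast
      then have "x \<le> chi (supp s)" using schi[OF s(1)] by simp
      then have "x = chi (supp x)" "supp x \<subseteq> supp s" using le_chi by auto
      moreover have "supp s \<in> P" using s unfolding P_def by auto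
      ultimately show "x \<in> LP P" unfolding LP_def DP_def by blast
    qed
    show "LP P \<subseteq> lam"
    proof
      fix x assume "x \<in> LP P"
      then obtain S' s where S': "x = chi S'" "S' \<subseteq> supp s" "s \<in> ?S" unfolding LP_def DP_def P_def by auto
      have "chi S' \<le> chi (supp s)" using S'(2) chi_le_iff by blast
      then have "x \<le> s" using S'(1) schi[OF S'(3)] by simp
      moreover have "x \<in> pts k" unfolding S'(1)
        by (rule chi_pts[OF order_trans[OF S'(2) supp_sub[OF Sp[OF S'(3)]]]])
      ultimately show "x \<in> lam" using down S'(3) Ssub by blast
    qed
  qed
  then show ?thesis using PTP k_def by blast
qed

lemma M_to_hyp:
  assumes M: "M_partition (3*n) (3*n) n lam" and pl: "plength (3*n) lam = 3"
  shows "is_partition (3*n) lam \<and> hilb (3*n) lam 1 = 3*n \<and> socle_type_3 (3*n) lam n"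
proof -
  define k where "k = 3*n"
  have part: "is_partition k lam" and h1: "hilb k lam 1 = k"
    and soc: "\<forall>x\<in>socle lam. deg k x \<ge> 3" and c3: "card {x\<in>lam. deg k x \<ge> 3} = n"
    using M unfolding M_partition_def k_def by auto
  have fin: "finite lam" and sub: "lam \<subseteq> pts k" using part unfolding is_partition_def by auto
  have dle: "\<And>x. x \<in> lam \<Longrightarrow> deg k x \<le> 3"
  proof -
    fix x assume "x \<in> lam"
    then have "deg k x \<le> Max (deg k ` lam)" using fin by simp
    then show "deg k x \<le> 3" using pl unfolding plength_def k_def by simp
  qed
  have seq: "socle lam = {x\<in>lam. deg k x \<ge> 3}"
  proof
    show "socle lam \<subseteq> {x\<in>lam. deg k x \<ge> 3}" using soc unfolding socle_def by auto
    show "{x\<in>lam. deg k x \<ge> 3} \<subseteq> socle lam"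
    proof
      fix x assume x: "x \<in> {x\<in>lam. deg k x \<ge> 3}"
      have "\<forall>y\<in>lam. x \<le> y \<longrightarrow> y = x"
      proof (intro ballI impI)
        fix y assume y: "y \<in> lam" "x \<le> y"
        show "y = x"
        proof (rule ccontr)
          assume "y \<noteq> x"
          then have "deg k x < deg k y" using deg_strict[of x k y] x y sub by auto
          then show False using x dle[OF y(1)] by simp
        qed
      qed
      then show "x \<in> socle lam" using x unfolding socle_def by auto
    qed
  qed
  have "\<forall>x\<in>socle lam. deg k x = 3"
  proof
    fix x assume "x \<in> socle lam"
    then have "x \<in> lam" "deg k x \<ge> 3" using seq by auto
    then show "deg k x = 3" using dle by (simp add: le_antisym)
  qed
  moreover have "card (socle lam) = n" using seq c3 by simp
  ultimately have "socle_type_3 k lam n" unfolding socle_type_3_def by simp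
  then show ?thesis using part h1 k_def by simp
qed

lemma P_rec:
  assumes P: "P \<in> TP {..<k}"
  shows "{S\<in>DP P. card S = 3} = P"
proof
  show "P \<subseteq> {S\<in>DP P. card S = 3}"
  proof
    fix T assume T: "T \<in> P"
    then have "T \<in> DP P" unfolding DP_def by blast
    then show "T \<in> {S\<in>DP P. card S = 3}" using TP_props(3)[OF P T] by simp
  qed
  show "{S\<in>DP P. card S = 3} \<subseteq> P"
  proof
    fix S assume S: "S \<in> {S\<in>DP P. card S = 3}"
    then have "S \<in> DP P" and cS: "card S = 3" by simp_all
    then obtain T where T: "T \<in> P" "S \<subseteq> T" unfolding DP_def by blast
    have "card S = card T" using cS TP_props(3)[OF P T(1)] by simp
    then have "S = T" by (rule card_subset_eq[OF TP_props(4)[OF P T(1)] T(2)])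
    then show "S \<in> P" using T(1) by simp
  qed
qed

lemma LP_inj: "inj_on LP (TP {..<k})"
proof (rule inj_onI)
  fix P P' assume P: "P \<in> TP {..<k}" and P': "P' \<in> TP {..<k}" and e: "LP P = LP P'"
  have "chi ` DP P = chi ` DP P'" using e unfolding LP_def .
  then have dd: "DP P = DP P'" by (rule inj_image_eq_iff[OF chi_inj, THEN iffD1])
  have "P = {S\<in>DP P. card S = 3}" using P_rec[OF P] by (rule sym)
  also have "\<dots> = {S\<in>DP P'. card S = 3}" unfolding dd ..
  also have "\<dots> = P'" by (rule P_rec[OF P'])
  finally show "P = P'" .
qed

theorem proposition5p1:
  fixes n :: nat
  assumes "n \<ge> 1"
  shows "(\<forall>lam. is_partition (3*n) lam \<and> hilb (3*n) lam 1 = 3*n \<and> socle_type_3 (3*n) lam n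
            \<longrightarrow> hilb_tuple (3*n) lam = [1, 3*n, 3*n, n] \<and>
                M_partition (3*n) (3*n) n lam \<and> plength (3*n) lam = 3)
         \<and> real (alpha (3*n) (3*n) n 3) = fact (3*n) / (6^n * fact n)"
proof
  show "\<forall>lam. is_partition (3*n) lam \<and> hilb (3*n) lam 1 = 3*n \<and> socle_type_3 (3*n) lam n
            \<longrightarrow> hilb_tuple (3*n) lam = [1, 3*n, 3*n, n] \<and>
                M_partition (3*n) (3*n) n lam \<and> plength (3*n) lam = 3"
  proof (intro allI impI)
    fix lam assume h: "is_partition (3*n) lam \<and> hilb (3*n) lam 1 = 3*n \<and> socle_type_3 (3*n) lam n"
    then obtain P where "P \<in> TP {..<3*n}" "lam = LP P" using structure_thm[OF assms] by blast
    then show "hilb_tuple (3*n) lam = [1, 3*n, 3*n, n] \<and>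
                M_partition (3*n) (3*n) n lam \<and> plength (3*n) lam = 3"
      using LP_good[OF assms] by simp
  qed
next
  have eq: "{lam. M_partition (3*n) (3*n) n lam \<and> plength (3*n) lam = 3} = LP ` TP {..<3*n}"
  proof
    show "{lam. M_partition (3*n) (3*n) n lam \<and> plength (3*n) lam = 3} \<subseteq> LP ` TP {..<3*n}"
    proof
      fix lam assume "lam \<in> {lam. M_partition (3*n) (3*n) n lam \<and> plength (3*n) lam = 3}"
      then have "is_partition (3*n) lam \<and> hilb (3*n) lam 1 = 3*n \<and> socle_type_3 (3*n) lam n"
        using M_to_hyp by blast
      then show "lam \<in> LP ` TP {..<3*n}" using structure_thm[OF assms] by blast
    qed
    show "LP ` TP {..<3*n} \<subseteq> {lam. M_partition (3*n) (3*n) n lam \<and> plength (3*n) lam = 3}"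
      using LP_good[OF assms] by blast
  qed
  have "alpha (3*n) (3*n) n 3 = card (TP {..<3*n})"
    unfolding alpha_def eq by (rule card_image[OF LP_inj])
  moreover have "card (TP {..<3*n}) * 6^n * fact n = fact (3*n)"
    by (rule card_TP) simp_all
  ultimately have "alpha (3*n) (3*n) n 3 * 6^n * fact n = fact (3*n)" by simp
  then have "real (alpha (3*n) (3*n) n 3 * 6^n * fact n) = real (fact (3*n))" by simp
  then have "real (alpha (3*n) (3*n) n 3) * 6^n * fact n = fact (3*n)"
    unfolding of_nat_mult of_nat_power of_nat_fact by simp
  moreover have "(6::real)^n * fact n \<noteq> 0" by simp
  ultimately show "real (alpha (3*n) (3*n) n 3) = fact (3*n) / (6^n * fact n)"
    by (simp add: field_simps)
qed

end
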